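(* Let $f(z)=z+\sum_{k=2}^\infty b_kz^k\in\mathscr{S}^*_\wp$. Then $|H_3(1)|\le 0.150627$, where $H_3(1)=b_3(b_2b_4-b_3^2)-b_4(b_4-b_2b_3)+b_5(b_3-b_2^2)$.
   Context: $\mathbb{D}$ is the unit disk; $\mathcal{A}$ is the class of analytic $f$ on $\mathbb{D}$ with $f(0)=0,f'(0)=1$. $f\prec g$ means $f=g\circ\omega$ for analytic $\omega:\mathbb{D}\to\mathbb{D}$, $\omega(0)=0$. $\wp(z)=1+ze^z$, $\mathscr{S}^*_\wp=\{f\in\mathcal{A}:zf'(z)/f(z)\prec\wp(z)\}$. *)

theory Defs
  imports "HOL-Complex_Analysis.Complex_Analysis"
begin

definition wp :: "complex \<Rightarrow> complex" where
  "wp z = 1 + z * exp z"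

definition subordinate :: "(complex \<Rightarrow> complex) \<Rightarrow> (complex \<Rightarrow> complex) \<Rightarrow> bool" where
  "subordinate g h \<longleftrightarrow>
     (\<exists>\<omega>. \<omega> holomorphic_on ball 0 1 \<and> \<omega> 0 = 0 \<and> \<omega> ` ball 0 1 \<subseteq> ball 0 1 \<and>
          (\<forall>z\<in>ball 0 1. g z = h (\<omega> z)))"

definition classA :: "(complex \<Rightarrow> complex) set" where
  "classA = {f. f holomorphic_on ball 0 1 \<and> f 0 = 0 \<and> deriv f 0 = 1}"

text \<open>The class S*_wp: z f'(z)/f(z) (extended by its limit value 1 at 0) is subordinate
  to wp; f is required to be nonzero on the punctured disk so that z f'/f is defined.\<close>
definition starlike_wp :: "(complex \<Rightarrow> complex) set" where
  "starlike_wp = {f. f \<in> classA \<and> (\<forall>z\<in>ball 0 1 - {0}. f z \<noteq> 0) \<and>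
      subordinate (\<lambda>z. if z = 0 then 1 else z * deriv f z / f z) wp}"

definition taylor_coeff :: "(complex \<Rightarrow> complex) \<Rightarrow> nat \<Rightarrow> complex" where
  "taylor_coeff f k = (deriv ^^ k) f 0 / of_nat (fact k)"

end

theory Submission
  imports Defs
begin


lemma real_poly_bound:
  fixes x1 x2 x3 x4 :: real
  assumes nn: "x1 \<ge> 0" "x2 \<ge> 0" "x3 \<ge> 0" "x4 \<ge> 0"
    and s: "x1^2 + x2^2 + x3^2 + x4^2 \<le> 1"
  shows "x1^6/36 + 5/144*x1^4*x2 + 1/9*x1^3*x3 + 25/144*x1^2*x2^2 + 1/36*x1*x2*x3
         + 1/16*x2^3 + 1/9*x3^2 + 1/8*x2*x4 \<le> 0.1506"
proof -
  have q: "0 \<le> x1^2" "0 \<le> x2^2" "0 \<le> x3^2" "0 \<le> x4^2" by simp_all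
  have "x1^2 \<le> 1" using s q by linarith
  hence "x1^2 \<le> 1^2" by simp
  hence x1: "x1 \<le> 1" by (rule power2_le_imp_le) simp
  have "x2^2 \<le> 1" using s q by linarith
  hence "x2^2 \<le> 1^2" by simp
  hence x2: "x2 \<le> 1" by (rule power2_le_imp_le) simp
  have "0 \<le> (x1-x2)^2" by simp
  hence "2*(x1*x2) \<le> x1^2 + x2^2" by (simp add: power2_diff)
  hence x12: "x1*x2 \<le> 1/2" using s q by linarith
  have "0 \<le> (x1-x3)^2" by simp
  hence "2*(x1*x3) \<le> x1^2 + x3^2" by (simp add: power2_diff)
  hence x13: "x1*x3 \<le> 1/2" using s q by linarith
  have T1: "x1^6/36 \<le> 1/36*x1^2"
  proof -
    have "x1^6 = x1^2 * x1^4" by algebra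
    also have "\<dots> \<le> x1^2 * 1" using x1 nn by (intro mult_left_mono) (auto simp: power_le_one)
    finally show ?thesis by (simp add: algebra_simps)
  qed
  have T2: "5/144*x1^4*x2 \<le> 5/288*x1^2"
  proof -
    have "x1^4*x2 = x1^2*x1*(x1*x2)" by algebra
    also have "\<dots> \<le> x1^2*1*(1/2)" using x1 x12 nn
      by (intro mult_mono) auto
    finally show ?thesis by (simp add: algebra_simps)
  qed
  have T3: "1/9*x1^3*x3 \<le> 1/18*x1^2"
  proof -
    have "x1^3*x3 = x1^2*(x1*x3)" by algebra
    also have "\<dots> \<le> x1^2*(1/2)" using x13 nn
      by (intro mult_left_mono) auto
    finally show ?thesis by (simp add: algebra_simps)
  qed
  have T4: "25/144*x1^2*x2^2 \<le> 25/144*(7/25*x1^2 + 9/40*x2^2)"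
  proof -
    define a where "a = x1^2"
    define b where "b = x2^2"
    have ab: "a \<ge> 0" "b \<ge> 0" "a + b \<le> 1" unfolding a_def b_def using s q(3,4) by (simp, simp, linarith)
    have "a*b \<le> 7/25*a + 9/40*b"
    proof (cases "a \<le> 9/40")
      case True
      hence "b*(9/40 - a) \<ge> 0" using ab by simp
      thus ?thesis using ab by (simp add: algebra_simps)
    next
      case False
      have "b*(9/40 - a) \<ge> (1-a)*(9/40-a)" using False ab
        by (intro mult_right_mono_neg) auto
      moreover have "0 \<le> (a - 189/400)^2" by simp
      moreover have "b*(9/40 - a) = 9/40*b - a*b" by algebra
      moreover have "(1-a)*(9/40-a) = a*a - 49/40*a + 9/40" by algebra
      moreover have "(a - 189/400)^2 = a*a - 189/200*a + 35721/160000" by algebra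
      ultimately show ?thesis by linarith
    qed
    thus ?thesis unfolding a_def b_def by (simp add: power_mult_distrib)
  qed
  have T5: "1/36*x1*x2*x3 \<le> 1/36*(1/5*x2^2 + 5/4*x3^2)"
  proof -
    have "x1*(x2*x3) \<le> 1*(x2*x3)" using x1 nn
      by (intro mult_right_mono) auto
    hence "x1*x2*x3 \<le> 1*(x2*x3)" by (simp add: mult.assoc)
    also have "0 \<le> (x2 - 5/2*x3)^2" by simp
    hence "x2*x3 \<le> 1/5*x2^2 + 5/4*x3^2" by (simp add: power2_diff algebra_simps power2_eq_square)
    finally show ?thesis by (simp add: algebra_simps)
  qed
  have T6: "1/16*x2^3 \<le> 1/16*x2^2" using x2 nn by (simp add: power_decreasing)
  have "0 \<le> (x2/2 - x4)^2" by simp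
  hence T8: "1/8*x2*x4 \<le> 1/8*(1/4*x2^2 + x4^2)"
    by (simp add: power2_diff algebra_simps power2_eq_square)
  have eq: "x1^6/36 + 5/144*x1^4*x2 + 1/9*x1^3*x3 + 25/144*x1^2*x2^2 + 1/36*x1*x2*x3
         + 1/16*x2^3 + 1/9*x3^2 + 1/8*x2*x4 = (x1^6/36) + (5/144*x1^4*x2) + (1/9*x1^3*x3) + (25/144*x1^2*x2^2) + (1/36*x1*x2*x3)
         + (1/16*x2^3) + 1/9*x3^2 + (1/8*x2*x4)" by simp
  define A1 where "A1 = x1^6/36"
  define A2 where "A2 = 5/144*x1^4*x2"
  define A3 where "A3 = 1/9*x1^3*x3"
  define A4 where "A4 = 25/144*x1^2*x2^2"
  define A5 where "A5 = 1/36*x1*x2*x3"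
  define A6 where "A6 = 1/16*x2^3"
  define A8 where "A8 = 1/8*x2*x4"
  define a where "a = x1^2"
  define b where "b = x2^2"
  define c where "c = x3^2"
  define d where "d = x4^2"
  have "A1 + A2 + A3 + A4 + A5 + A6 + 1/9*c + A8 \<le> 1506/10000"
    using T1 T2 T3 T4 T5 T6 T8 s q
    unfolding A1_def[symmetric] A2_def[symmetric] A3_def[symmetric] A4_def[symmetric] A5_def[symmetric] A6_def[symmetric] A8_def[symmetric]
    unfolding a_def[symmetric] b_def[symmetric] c_def[symmetric] d_def[symmetric]
    by (simp add: ring_distribs)
  thus ?thesis unfolding A1_def A2_def A3_def A4_def A5_def A6_def A8_def c_def by simp
qed



lemma sums_norm_le:
  fixes f :: "nat \<Rightarrow> complex"
  assumes "f sums s" "g sums t" "\<And>n. norm (f n) \<le> g n"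
  shows "norm s \<le> t"
proof -
  have sg: "summable g" using assms(2) by (simp add: sums_iff)
  have sn: "summable (\<lambda>n. norm (f n))"
    by (rule summable_comparison_test[of _ g]) (use assms(3) sg in auto)
  have "norm s = norm (suminf f)" using assms(1) by (simp add: sums_iff)
  also have "\<dots> \<le> (\<Sum>n. norm (f n))" by (rule summable_norm[OF sn])
  also have "\<dots> \<le> suminf g" by (rule suminf_le) (use assms(3) sn sg in auto)
  also have "\<dots> = t" using assms(2) by (simp add: sums_iff)
  finally show ?thesis .
qed

lemma schwarz_coeff_le1:
  fixes w :: "complex \<Rightarrow> complex"
  assumes holo: "w holomorphic_on ball 0 1" and bnd: "\<And>z. z \<in> ball 0 1 \<Longrightarrow> cmod (w z) < 1"
  shows "cmod ((deriv ^^ k) w 0 / fact k) \<le> 1"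
proof -
  define A where "A = cmod ((deriv ^^ k) w 0 / fact k)"
  have ev: "eventually (\<lambda>s. A * s^k \<le> 1) (at_left (1::real))"
    using eventually_at_left_real[of 0 "1::real", OF zero_less_one]
  proof eventually_elim
    case (elim s)
    hence s: "0 < s" "s < 1" by auto
    have "norm ((deriv ^^ k) w 0) \<le> fact k * 1 / s^k"
    proof (rule Cauchy_inequality)
      show "w holomorphic_on ball 0 s" by (rule holomorphic_on_subset[OF holo]) (use s in auto)
      have "w holomorphic_on cball 0 s" by (rule holomorphic_on_subset[OF holo]) (use s in auto)
      thus "continuous_on (cball 0 s) w" by (rule holomorphic_on_imp_continuous_on)
      show "0 < s" by fact
      fix x :: complex assume "norm (0 - x) = s"
      hence "x \<in> ball 0 1" using s by auto
      thus "norm (w x) \<le> 1" using bnd by (simp add: less_imp_le)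
    qed
    hence "norm ((deriv ^^ k) w 0) * s^k \<le> fact k" using s by (simp add: field_simps)
    thus ?case unfolding A_def using s by (simp add: norm_divide field_simps)
  qed
  have "((\<lambda>s. A * s^k) \<longlongrightarrow> A * 1^k) (at_left (1::real))" by (intro tendsto_intros)
  hence "A * 1^k \<le> 1" by (rule tendsto_upperbound) (use ev in auto)
  thus ?thesis unfolding A_def by simp
qed

lemma root_unity_pow_ne1:
  fixes m n :: nat
  assumes "0 < n" "n < m"
  shows "exp (2*pi*\<i>/of_nat m) ^ n \<noteq> 1"
proof
  assume h: "exp (2*pi*\<i>/of_nat m) ^ n = 1"
  have "exp (2*pi*\<i>/of_nat m) ^ n = exp (of_nat n * (2*pi*\<i>/of_nat m))"
    by (rule exp_of_nat_mult[symmetric])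
  with h have "exp (of_nat n * (2*pi*\<i>/of_nat m)) = 1" by simp
  then obtain t :: int where t: "Im (of_nat n * (2*pi*\<i>/of_nat m)) = of_int (2*t) * pi"
    by (auto simp: exp_eq_1)
  have "Im (of_nat n * (2*pi*\<i>/of_nat m)) = 2*pi*n/m"
    by (simp add: field_simps)
  with t have "2*pi*n/m = 2*t*pi" by simp
  hence "real n = real m * t" using assms by (simp add: field_simps)
  hence "int n = int m * t" by (metis of_int_eq_iff of_int_mult of_int_of_nat_eq)
  thus False using assms
    by (metis dvd_triv_left int_dvd_int_iff nat_dvd_not_less)
qed

lemma root_unity_sum:
  fixes k l N :: nat
  assumes "k \<le> N" "l \<le> N"
  defines "u \<equiv> exp (2*pi*\<i>/of_nat (Suc N))"
  shows "(\<Sum>j<Suc N. (u^k / u^l)^j) = (if k = l then of_nat (Suc N) else 0)"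
proof (cases "k = l")
  case True
  have "u \<noteq> 0" unfolding u_def by simp
  thus ?thesis using True by simp
next
  case False
  have u0: "u \<noteq> 0" unfolding u_def by simp
  have um: "u ^ Suc N = 1"
  proof -
    have "u ^ Suc N = exp (of_nat (Suc N) * (2*pi*\<i>/of_nat (Suc N)))"
      unfolding u_def by (rule exp_of_nat_mult[symmetric])
    also have "of_nat (Suc N) * (2*pi*\<i>/of_nat (Suc N)) = 2*pi*\<i>"
      by (simp del: of_nat_Suc)
    finally show ?thesis by simp
  qed
  have z1: "u^k / u^l \<noteq> 1"
  proof
    assume "u^k / u^l = 1"
    hence e: "u^k = u^l" using u0 by (simp add: divide_eq_1_iff)
    show False
    proof (cases "k < l")
      case True
      have "u^l = u^k * u^(l-k)" using True by (simp add: power_add[symmetric])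
      with e u0 have "u^(l-k) = 1" by simp
      moreover have "u^(l-k) \<noteq> 1" unfolding u_def
        using True assms by (intro root_unity_pow_ne1) auto
      ultimately show False by simp
    next
      case False
      hence "l < k" using \<open>k \<noteq> l\<close> by simp
      have "u^k = u^l * u^(k-l)" using \<open>l < k\<close> by (simp add: power_add[symmetric])
      with e u0 have "u^(k-l) = 1" by simp
      moreover have "u^(k-l) \<noteq> 1" unfolding u_def
        using \<open>l < k\<close> assms by (intro root_unity_pow_ne1) auto
      ultimately show False by simp
    qed
  qed
  have zm: "(u^k / u^l)^Suc N = 1"
  proof -
    have "(u^k / u^l)^Suc N = (u^k)^Suc N / (u^l)^Suc N" by (rule power_divide)
    also have "\<dots> = (u^Suc N)^k / (u^Suc N)^l" by (simp only: power_mult[symmetric] mult.commute)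
    also have "\<dots> = 1" by (simp only: um power_one div_by_1)
    finally show ?thesis .
  qed
  define z where "z = u^k / u^l"
  have "(\<Sum>j<Suc N. z^j) = (if z = 1 then of_nat (Suc N) else (1 - z^Suc N)/(1 - z))"
    by (rule sum_gp_strict)
  also have "\<dots> = 0" using z1 zm unfolding z_def[symmetric] by simp
  finally show ?thesis using False unfolding z_def by simp
qed

lemma discrete_parseval:
  fixes d :: "nat \<Rightarrow> complex" and N :: nat
  defines "u \<equiv> exp (2*pi*\<i>/of_nat (Suc N))"
  shows "(\<Sum>j<Suc N. (cmod (\<Sum>k\<le>N. d k * u^(j*k)))^2) = Suc N * (\<Sum>k\<le>N. (cmod (d k))^2)"
proof -
  have u0: "u \<noteq> 0" unfolding u_def by simp
  have cu: "cnj u = inverse u"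
  proof -
    have "cnj u = exp (cnj (2*pi*\<i>/of_nat (Suc N)))" unfolding u_def by (simp add: exp_cnj)
    also have "cnj (2*pi*\<i>/of_nat (Suc N)) = - (2*pi*\<i>/of_nat (Suc N))"
      by (simp add: complex_eq_iff)
    finally show ?thesis unfolding u_def by (simp add: exp_minus)
  qed
  have "complex_of_real (\<Sum>j<Suc N. (cmod (\<Sum>k\<le>N. d k * u^(j*k)))^2)
      = (\<Sum>j<Suc N. (\<Sum>k\<le>N. d k * u^(j*k)) * cnj (\<Sum>l\<le>N. d l * u^(j*l)))"
    by (simp only: of_real_sum complex_norm_square)
  also have "\<dots> = (\<Sum>j<Suc N. \<Sum>k\<le>N. \<Sum>l\<le>N. d k * cnj (d l) * (u^k / u^l)^j)"
  proof (intro sum.cong refl)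
    fix j
    show "(\<Sum>k\<le>N. d k * u^(j*k)) * cnj (\<Sum>l\<le>N. d l * u^(j*l))
        = (\<Sum>k\<le>N. \<Sum>l\<le>N. d k * cnj (d l) * (u^k / u^l)^j)"
    proof -
      have t: "d k * u^(j*k) * (cnj (d l) * cnj u ^ (j*l)) = d k * cnj (d l) * (u^k / u^l)^j" for k l
      proof -
        have "(u^k / u^l)^j = u^(j*k) * inverse u ^ (j*l)"
          by (simp add: power_divide power_mult[symmetric] mult.commute[of j] divide_inverse power_mult_distrib power_inverse)
        thus ?thesis by (simp add: cu)
      qed
      have "(\<Sum>k\<le>N. d k * u^(j*k)) * cnj (\<Sum>l\<le>N. d l * u^(j*l))
          = (\<Sum>k\<le>N. d k * u^(j*k)) * (\<Sum>l\<le>N. cnj (d l) * cnj u ^ (j*l))"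
        by (simp add: cnj_sum)
      also have "\<dots> = (\<Sum>k\<le>N. \<Sum>l\<le>N. d k * u^(j*k) * (cnj (d l) * cnj u ^ (j*l)))"
        by (rule sum_product)
      also have "\<dots> = (\<Sum>k\<le>N. \<Sum>l\<le>N. d k * cnj (d l) * (u^k / u^l)^j)"
        by (simp only: t)
      finally show ?thesis .
    qed
  qed
  also have "\<dots> = (\<Sum>k\<le>N. \<Sum>l\<le>N. d k * cnj (d l) * (\<Sum>j<Suc N. (u^k / u^l)^j))"
  proof -
    have "(\<Sum>j<Suc N. \<Sum>k\<le>N. \<Sum>l\<le>N. d k * cnj (d l) * (u^k / u^l)^j)
        = (\<Sum>k\<le>N. \<Sum>j<Suc N. \<Sum>l\<le>N. d k * cnj (d l) * (u^k / u^l)^j)"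
      by (rule sum.swap)
    also have "\<dots> = (\<Sum>k\<le>N. \<Sum>l\<le>N. \<Sum>j<Suc N. d k * cnj (d l) * (u^k / u^l)^j)"
      by (rule sum.cong[OF refl]) (rule sum.swap)
    also have "\<dots> = (\<Sum>k\<le>N. \<Sum>l\<le>N. d k * cnj (d l) * (\<Sum>j<Suc N. (u^k / u^l)^j))"
      by (simp only: sum_distrib_left)
    finally show ?thesis .
  qed
  also have "\<dots> = (\<Sum>k\<le>N. \<Sum>l\<le>N. d k * cnj (d l) * (if k = l then of_nat (Suc N) else 0))"
    unfolding u_def by (intro sum.cong refl, subst root_unity_sum) auto
  also have "\<dots> = (\<Sum>k\<le>N. d k * cnj (d k) * of_nat (Suc N))"
    by (simp add: if_distrib cong: if_cong)
  also have "\<dots> = of_nat (Suc N) * (\<Sum>k\<le>N. complex_of_real ((cmod (d k))^2))"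
    by (simp only: complex_norm_square sum_distrib_left mult.commute)
  also have "\<dots> = complex_of_real (Suc N * (\<Sum>k\<le>N. (cmod (d k))^2))"
    by (simp only: of_real_mult of_real_sum of_real_of_nat_eq)
  finally show ?thesis by (simp only: of_real_eq_iff)
qed


lemma schwarz_sq_step:
  fixes w :: "complex \<Rightarrow> complex"
  assumes holo: "w holomorphic_on ball 0 1" and bnd: "\<And>z. z \<in> ball 0 1 \<Longrightarrow> cmod (w z) < 1"
    and r: "0 < r" "r < 1" and MN: "M \<le> N"
  shows "(\<Sum>k\<le>M. (cmod ((deriv ^^ k) w 0 / fact k))^2 * r^(2*k)) \<le> (1 + r^Suc N / (1 - r))^2"
proof -
  define a where "a k = (deriv ^^ k) w 0 / fact k" for k
  define u where "u = exp (2*pi*\<i>/of_nat (Suc N))"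
  define d where "d k = a k * of_real (r^k)" for k
  define \<delta> where "\<delta> = r^Suc N / (1 - r)"
  have \<delta>0: "0 \<le> \<delta>" unfolding \<delta>_def using r by simp
  have a1: "cmod (a k) \<le> 1" for k unfolding a_def by (rule schwarz_coeff_le1[OF holo bnd])
  have nu: "norm u = 1" unfolding u_def by (simp add: norm_exp_eq_Re)
  have bnd_j: "cmod (\<Sum>k\<le>N. d k * u^(j*k)) \<le> 1 + \<delta>" for j
  proof -
    define z where "z = of_real r * u^j"
    have nz: "norm z = r" unfolding z_def using r by (simp add: norm_mult norm_power nu)
    hence zb: "z \<in> ball 0 1" using r by simp
    have ser: "(\<lambda>n. a n * z^n) sums w z"
      using holomorphic_power_series[OF holo zb] unfolding a_def by simp
    have tail: "(\<lambda>n. a (n + Suc N) * z^(n + Suc N)) sums (w z - (\<Sum>n<Suc N. a n * z^n))"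
      using sums_split_initial_segment[OF ser, of "Suc N"] by simp
    have geo: "(\<lambda>n. r^(n + Suc N)) sums \<delta>"
    proof -
      have "(\<lambda>n. r^n) sums (1 / (1 - r))" using r by (intro geometric_sums) simp
      hence "(\<lambda>n. r^Suc N * r^n) sums (r^Suc N * (1 / (1 - r)))" by (rule sums_mult)
      thus ?thesis unfolding \<delta>_def by (simp add: power_add mult_ac)
    qed
    have "cmod (w z - (\<Sum>n<Suc N. a n * z^n)) \<le> \<delta>"
    proof (rule sums_norm_le[OF tail geo])
      fix n
      have "cmod (a (n + Suc N) * z^(n + Suc N)) = cmod (a (n + Suc N)) * r^(n + Suc N)"
        by (simp add: norm_mult norm_power nz)
      also have "\<dots> \<le> 1 * r^(n + Suc N)" using a1 r by (intro mult_right_mono) auto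
      finally show "cmod (a (n + Suc N) * z^(n + Suc N)) \<le> r^(n + Suc N)" by simp
    qed
    moreover have "(\<Sum>n<Suc N. a n * z^n) = (\<Sum>k\<le>N. d k * u^(j*k))"
      unfolding lessThan_Suc_atMost
      by (intro sum.cong refl) (simp add: d_def z_def power_mult_distrib mult_ac flip: power_mult)
    ultimately have tb: "cmod (w z - (\<Sum>k\<le>N. d k * u^(j*k))) \<le> \<delta>" by simp
    have "cmod (w z) \<le> 1" using bnd[OF zb] by simp
    thus ?thesis using norm_triangle_sub[of "\<Sum>k\<le>N. d k * u^(j*k)" "w z"]
      norm_minus_commute[of "w z" "\<Sum>k\<le>N. d k * u^(j*k)"] tb by linarith
  qed
  have "real (Suc N) * (\<Sum>k\<le>N. (cmod (d k))^2) = (\<Sum>j<Suc N. (cmod (\<Sum>k\<le>N. d k * u^(j*k)))^2)"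
    unfolding u_def by (rule discrete_parseval[symmetric])
  also have "\<dots> \<le> (\<Sum>j<Suc N. (1 + \<delta>)^2)"
    by (intro sum_mono power_mono bnd_j) simp
  also have "\<dots> = real (Suc N) * (1 + \<delta>)^2" by simp
  finally have "(\<Sum>k\<le>N. (cmod (d k))^2) \<le> (1 + \<delta>)^2"
    by (simp del: of_nat_Suc)
  moreover have "(\<Sum>k\<le>M. (cmod (d k))^2) \<le> (\<Sum>k\<le>N. (cmod (d k))^2)"
    by (rule sum_mono2) (use MN in auto)
  moreover have "(cmod (d k))^2 = (cmod (a k))^2 * r^(2*k)" for k
    unfolding d_def using r by (simp add: norm_mult norm_power power_mult_distrib power_mult[symmetric] mult.commute[of 2])
  ultimately show ?thesis unfolding a_def \<delta>_def by simp
qed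

lemma schwarz_sq_sum:
  fixes w :: "complex \<Rightarrow> complex"
  assumes holo: "w holomorphic_on ball 0 1" and bnd: "\<And>z. z \<in> ball 0 1 \<Longrightarrow> cmod (w z) < 1"
  shows "(\<Sum>k\<le>M. (cmod ((deriv ^^ k) w 0 / fact k))^2) \<le> 1"
proof -
  define S where "S r = (\<Sum>k\<le>M. (cmod ((deriv ^^ k) w 0 / fact k))^2 * r^(2*k))" for r :: real
  have Sr: "S r \<le> 1" if r: "0 < r" "r < 1" for r
  proof -
    have lim: "(\<lambda>N. (1 + r^Suc N / (1 - r))^2) \<longlonglongrightarrow> (1 + 0 / (1 - r))^2"
    proof (intro tendsto_intros)
      show "(\<lambda>N. r^Suc N) \<longlonglongrightarrow> 0"
        using LIMSEQ_Suc[OF LIMSEQ_power_zero[of r]] r by simp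
    qed (use r in simp)
    have ev: "eventually (\<lambda>N. S r \<le> (1 + r^Suc N / (1 - r))^2) sequentially"
      using eventually_ge_at_top[of M]
      by eventually_elim (unfold S_def, rule schwarz_sq_step[OF holo bnd r])
    have "S r \<le> (1 + 0 / (1 - r))^2" by (rule tendsto_lowerbound[OF lim ev]) simp
    thus ?thesis by simp
  qed
  have lim: "(S \<longlongrightarrow> S 1) (at_left 1)" unfolding S_def by (intro tendsto_intros)
  have ev: "eventually (\<lambda>r. S r \<le> 1) (at_left (1::real))"
    using eventually_at_left_real[of 0 "1::real", OF zero_less_one]
    by eventually_elim (rule Sr, auto)
  have "S 1 \<le> 1" by (rule tendsto_upperbound[OF lim ev]) simp
  thus ?thesis unfolding S_def by simp
qed



lemma solve_coeffs:
  fixes w1 w2 w3 w4 e1 e2 e3 b2 b3 b4 b5 :: complex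
  assumes e1: "e1 = w1" and e2: "2*e2 = w1*e1 + 2*w2" and e3: "3*e3 = w1*e2 + 2*w2*e1 + 3*w3"
    and f2: "2*b2 = w1 + b2" and f3: "3*b3 = (w1*e1 + w2) + b2*w1 + b3"
    and f4: "4*b4 = (w1*e2 + w2*e1 + w3) + b2*(w1*e1 + w2) + b3*w1 + b4"
    and f5: "5*b5 = (w1*e3 + w2*e2 + w3*e1 + w4) + b2*(w1*e2 + w2*e1 + w3) + b3*(w1*e1 + w2) + b4*w1 + b5"
  shows "b2 = w1" and "b3 = w1^2 + w2/2" and "b4 = 5/6*w1^3 + 7/6*w1*w2 + w3/3"
    and "b5 = 5/8*w1^4 + 37/24*w1^2*w2 + 5/6*w1*w3 + 3/8*w2^2 + w4/4"
proof -
  have E2: "e2 = w1^2/2 + w2"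
  proof -
    have "e2 = (2*e2)/2" by simp
    also have "\<dots> = (w1*e1 + 2*w2)/2" using e2 by simp
    also have "\<dots> = w1^2/2 + w2" by (simp add: e1 field_simps power2_eq_square)
    finally show ?thesis .
  qed
  have E3: "e3 = w1^3/6 + w1*w2 + w3"
  proof -
    have "e3 = (3*e3)/3" by simp
    also have "\<dots> = (w1*e2 + 2*w2*e1 + 3*w3)/3" using e3 by simp
    also have "\<dots> = w1^3/6 + w1*w2 + w3" by (simp add: e1 E2 field_simps power2_eq_square power3_eq_cube)
    finally show ?thesis .
  qed
  show B2: "b2 = w1"
  proof -
    have "b2 = 2*b2 - b2" by simp
    also have "\<dots> = w1" using f2 by simp
    finally show ?thesis .
  qed
  show B3: "b3 = w1^2 + w2/2"
  proof -
    have "b3 = (3*b3 - b3)/2" by simp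
    also have "\<dots> = ((w1*e1 + w2) + b2*w1)/2" using f3 by simp
    also have "\<dots> = w1^2 + w2/2" by (simp add: e1 B2 field_simps power2_eq_square)
    finally show ?thesis .
  qed
  show B4: "b4 = 5/6*w1^3 + 7/6*w1*w2 + w3/3"
  proof -
    have "b4 = (4*b4 - b4)/3" by simp
    also have "\<dots> = ((w1*e2 + w2*e1 + w3) + b2*(w1*e1 + w2) + b3*w1)/3" using f4 by simp
    also have "\<dots> = 5/6*w1^3 + 7/6*w1*w2 + w3/3"
      by (simp add: e1 E2 B2 B3 field_simps power2_eq_square power3_eq_cube)
    finally show ?thesis .
  qed
  show "b5 = 5/8*w1^4 + 37/24*w1^2*w2 + 5/6*w1*w3 + 3/8*w2^2 + w4/4"
  proof -
    have "b5 = (5*b5 - b5)/4" by simp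
    also have "\<dots> = ((w1*e3 + w2*e2 + w3*e1 + w4) + b2*(w1*e2 + w2*e1 + w3) + b3*(w1*e1 + w2) + b4*w1)/4"
      using f5 by simp
    also have "\<dots> = 5/8*w1^4 + 37/24*w1^2*w2 + 5/6*w1*w3 + 3/8*w2^2 + w4/4"
      by (simp add: e1 E2 E3 B2 B3 B4 field_simps power2_eq_square power3_eq_cube eval_nat_numeral)
    finally show ?thesis .
  qed
qed


lemma fps_coeff_extract:
  fixes W E F :: "complex fps"
  assumes W0: "(fps_nth W 0) = 0" and E0: "(fps_nth E 0) = 1" and F0: "(fps_nth F 0) = 0" and F1: "(fps_nth F 1) = 1"
    and ode: "fps_deriv E = fps_deriv W * E"
    and feq: "fps_X * fps_deriv F = F * (1 + W * E)"
  shows "(fps_nth F 2) = (fps_nth W 1)"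
    and "(fps_nth F 3) = ((fps_nth W 1))^2 + (fps_nth W 2)/2"
    and "(fps_nth F 4) = 5/6*((fps_nth W 1))^3 + 7/6*(fps_nth W 1)*(fps_nth W 2) + (fps_nth W 3)/3"
    and "(fps_nth F 5) = 5/8*((fps_nth W 1))^4 + 37/24*((fps_nth W 1))^2*(fps_nth W 2) + 5/6*(fps_nth W 1)*(fps_nth W 3) + 3/8*((fps_nth W 2))^2 + (fps_nth W 4)/4"
proof -
  have od: "of_nat (n+1) * (fps_nth E (n+1)) = (\<Sum>i=0..n. of_nat (i+1) * (fps_nth W (i+1)) * (fps_nth E (n-i)))" for n
    using arg_cong[OF ode, of "\<lambda>G. (fps_nth G n)"] by (simp add: fps_mult_nth)
  have fe: "of_nat (Suc m) * (fps_nth F (Suc m)) = (\<Sum>i=0..Suc m. (fps_nth F i) * fps_nth (1 + W*E) (Suc m - i))" for m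
    using arg_cong[OF feq, of "\<lambda>G. fps_nth G (Suc m)"] unfolding fps_mult_nth[of F "1 + W*E"] by simp
  have s1: "(\<Sum>i=0..(1::nat). g i) = g 0 + g 1" for g :: "nat \<Rightarrow> complex"
    by (simp add: sum.atLeast0_atMost_Suc eval_nat_numeral)
  have s2: "(\<Sum>i=0..(2::nat). g i) = g 0 + g 1 + g 2" for g :: "nat \<Rightarrow> complex"
    by (simp add: sum.atLeast0_atMost_Suc eval_nat_numeral)
  have s3: "(\<Sum>i=0..(3::nat). g i) = g 0 + g 1 + g 2 + g 3" for g :: "nat \<Rightarrow> complex"
    by (simp add: sum.atLeast0_atMost_Suc eval_nat_numeral)
  have s4: "(\<Sum>i=0..(4::nat). g i) = g 0 + g 1 + g 2 + g 3 + g 4" for g :: "nat \<Rightarrow> complex"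
    by (simp add: sum.atLeast0_atMost_Suc eval_nat_numeral)
  have s5: "(\<Sum>i=0..(5::nat). g i) = g 0 + g 1 + g 2 + g 3 + g 4 + g 5" for g :: "nat \<Rightarrow> complex"
    by (simp add: sum.atLeast0_atMost_Suc eval_nat_numeral)
  have fe': "of_nat m * (fps_nth F m) = (\<Sum>i=0..m. (fps_nth F i) * fps_nth (1 + W*E) (m - i))" if "m > 0" for m
    using fe[of "m - 1"] that by simp
  have pp: "fps_nth (1 + W*E) k = (if k = 0 then 1 else 0) + (\<Sum>j=0..k. (fps_nth W j) * (fps_nth E (k-j)))" for k
    by (simp add: fps_mult_nth)
  have q1: "fps_nth (W*E) 1 = (fps_nth W 1)" using fps_mult_nth[of W E 1] W0 E0 by (simp only: s1) simp
  have q2: "fps_nth (W*E) 2 = (fps_nth W 1)*(fps_nth E 1) + (fps_nth W 2)"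
    using fps_mult_nth[of W E 2] W0 E0 by (simp only: s2) simp
  have q3: "fps_nth (W*E) 3 = (fps_nth W 1)*(fps_nth E 2) + (fps_nth W 2)*(fps_nth E 1) + (fps_nth W 3)"
    using fps_mult_nth[of W E 3] W0 E0 by (simp only: s3) simp
  have q4: "fps_nth (W*E) 4 = (fps_nth W 1)*(fps_nth E 3) + (fps_nth W 2)*(fps_nth E 2) + (fps_nth W 3)*(fps_nth E 1) + (fps_nth W 4)"
    using fps_mult_nth[of W E 4] W0 E0 by (simp only: s4) simp
  have e1: "(fps_nth E 1) = (fps_nth W 1)" using od[of 0] E0 by simp
  have e2: "2*(fps_nth E 2) = (fps_nth W 1)*(fps_nth E 1) + 2*(fps_nth W 2)" using od[of 1] E0 by (simp add: eval_nat_numeral)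
  have e3: "3*(fps_nth E 3) = (fps_nth W 1)*(fps_nth E 2) + 2*(fps_nth W 2)*(fps_nth E 1) + 3*(fps_nth W 3)" using od[of 2] E0 by (simp add: eval_nat_numeral)
  have f2: "2*(fps_nth F 2) = (fps_nth W 1) + (fps_nth F 2)" using fe'[of 2] F0 F1 by (simp only: s2) (simp add: q1 W0 E0)
  have f3: "3*(fps_nth F 3) = ((fps_nth W 1)*(fps_nth E 1) + (fps_nth W 2)) + (fps_nth F 2) * (fps_nth W 1) + (fps_nth F 3)"
    using fe'[of 3] F0 F1 by (simp only: s3) (simp add: q1 q2 W0 E0)
  have f4: "4*(fps_nth F 4) = ((fps_nth W 1)*(fps_nth E 2) + (fps_nth W 2)*(fps_nth E 1) + (fps_nth W 3)) + (fps_nth F 2)*((fps_nth W 1)*(fps_nth E 1) + (fps_nth W 2)) + (fps_nth F 3) * (fps_nth W 1) + (fps_nth F 4)"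
    using fe'[of 4] F0 F1 by (simp only: s4) (simp add: q1 q2 q3 W0 E0)
  have f5: "5*(fps_nth F 5) = ((fps_nth W 1)*(fps_nth E 3) + (fps_nth W 2)*(fps_nth E 2) + (fps_nth W 3)*(fps_nth E 1) + (fps_nth W 4)) + (fps_nth F 2)*((fps_nth W 1)*(fps_nth E 2) + (fps_nth W 2)*(fps_nth E 1) + (fps_nth W 3))
      + (fps_nth F 3)*((fps_nth W 1)*(fps_nth E 1) + (fps_nth W 2)) + (fps_nth F 4) * (fps_nth W 1) + (fps_nth F 5)"
    using fe'[of 5] F0 F1 by (simp only: s5) (simp add: q1 q2 q3 q4 W0 E0)
  note sc = solve_coeffs[OF e1 e2 e3 f2 f3 f4 f5]
  show "(fps_nth F 2) = (fps_nth W 1)" by (rule sc(1))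
  show "(fps_nth F 3) = ((fps_nth W 1))^2 + (fps_nth W 2)/2" by (rule sc(2))
  show "(fps_nth F 4) = 5/6*((fps_nth W 1))^3 + 7/6*(fps_nth W 1)*(fps_nth W 2) + (fps_nth W 3)/3" by (rule sc(3))
  show "(fps_nth F 5) = 5/8*((fps_nth W 1))^4 + 37/24*((fps_nth W 1))^2*(fps_nth W 2) + 5/6*(fps_nth W 1)*(fps_nth W 3) + 3/8*((fps_nth W 2))^2 + (fps_nth W 4)/4" by (rule sc(4))
qed

lemma cbound:
  fixes c1 c2 c3 c4 :: complex
  assumes s: "(cmod c1)^2 + (cmod c2)^2 + (cmod c3)^2 + (cmod c4)^2 \<le> 1"
  shows "cmod ((-(c1^6)/36) + (5/144*c1^4*c2) + (1/9*c1^3*c3) + (-(25/144*c1^2*c2^2))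
      + (-(1/36*c1*c2*c3)) + (1/16*c2^3) + (-(1/9*c3^2)) + (1/8*c2*c4)) \<le> 0.1506"
proof -
  define t1 where "t1 = -(c1^6)/36"
  define t2 where "t2 = 5/144*c1^4*c2"
  define t3 where "t3 = 1/9*c1^3*c3"
  define t4 where "t4 = -(25/144*c1^2*c2^2)"
  define t5 where "t5 = -(1/36*c1*c2*c3)"
  define t6 where "t6 = 1/16*c2^3"
  define t7 where "t7 = -(1/9*c3^2)"
  define t8 where "t8 = 1/8*c2*c4"
  have tri: "cmod (t1+t2+t3+t4+t5+t6+t7+t8) \<le> cmod t1 + cmod t2 + cmod t3 + cmod t4 + cmod t5
      + cmod t6 + cmod t7 + cmod t8"
    using norm_triangle_ineq[of "t1+t2+t3+t4+t5+t6+t7" t8] norm_triangle_ineq[of "t1+t2+t3+t4+t5+t6" t7]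
      norm_triangle_ineq[of "t1+t2+t3+t4+t5" t6] norm_triangle_ineq[of "t1+t2+t3+t4" t5]
      norm_triangle_ineq[of "t1+t2+t3" t4] norm_triangle_ineq[of "t1+t2" t3]
      norm_triangle_ineq[of "t1" t2] by linarith
  have "cmod t1 + cmod t2 + cmod t3 + cmod t4 + cmod t5 + cmod t6 + cmod t7 + cmod t8
      = (cmod c1)^6/36 + 5/144*(cmod c1)^4*(cmod c2) + 1/9*(cmod c1)^3*(cmod c3)
        + 25/144*(cmod c1)^2*(cmod c2)^2 + 1/36*(cmod c1)*(cmod c2)*(cmod c3)
        + 1/16*(cmod c2)^3 + 1/9*(cmod c3)^2 + 1/8*(cmod c2)*(cmod c4)"
    unfolding t1_def t2_def t3_def t4_def t5_def t6_def t7_def t8_def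
    by (simp add: norm_mult norm_power norm_divide)
  also have "\<dots> \<le> 0.1506" by (rule real_poly_bound) (use s in auto)
  finally show ?thesis using tri
    unfolding t1_def t2_def t3_def t4_def t5_def t6_def t7_def t8_def by linarith
qed

lemma fps_unique:
  fixes f g :: "complex \<Rightarrow> complex"
  assumes "f has_fps_expansion A" "g has_fps_expansion B" "eventually (\<lambda>z. f z = g z) (nhds 0)"
  shows "A = B"
proof (rule fps_ext)
  fix n
  show "(fps_nth A n) = (fps_nth B n)"
    using fps_nth_fps_expansion[OF assms(1), of n] fps_nth_fps_expansion[OF assms(2), of n]
      higher_deriv_cong_ev[OF assms(3) refl, of n] by simp
qed

theorem mainTheorem19:
  fixes f :: "complex \<Rightarrow> complex"
  assumes "f \<in> starlike_wp"
  shows "(let b = taylor_coeff f in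
           cmod (b 3 * (b 2 * b 4 - (b 3)^2) - b 4 * (b 4 - b 2 * b 3) + b 5 * (b 3 - (b 2)^2)))
         \<le> 0.150627"
proof -
  from assms have holf: "f holomorphic_on ball 0 1" and f0: "f 0 = 0" and df0: "deriv f 0 = 1"
    and nz: "\<And>z. z \<in> ball 0 1 - {0} \<Longrightarrow> f z \<noteq> 0"
    and sub: "subordinate (\<lambda>z. if z = 0 then 1 else z * deriv f z / f z) wp"
    unfolding starlike_wp_def classA_def by auto
  from sub obtain w where holw: "w holomorphic_on ball 0 1" and w0: "w 0 = 0"
    and wb: "w ` ball 0 1 \<subseteq> ball 0 1"
    and weq: "\<And>z. z \<in> ball 0 1 \<Longrightarrow> (if z = 0 then 1 else z * deriv f z / f z) = wp (w z)"
    unfolding subordinate_def by blast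
  have wlt: "cmod (w z) < 1" if "z \<in> ball 0 1" for z
  proof -
    have "w z \<in> ball 0 1" using wb that by blast
    thus ?thesis by simp
  qed
  have eqz: "z * deriv f z = f z * (1 + w z * exp (w z))" if z: "z \<in> ball 0 1" for z
  proof (cases "z = 0")
    case True thus ?thesis using f0 by simp
  next
    case False
    with weq[OF z] have "z * deriv f z / f z = 1 + w z * exp (w z)" by (simp add: wp_def)
    moreover have "f z \<noteq> 0" using nz z False by auto
    ultimately show ?thesis by (simp add: field_simps)
  qed
  have ob: "open (ball (0::complex) 1)" and zb: "(0::complex) \<in> ball 0 1" by auto
  have ev: "eventually (\<lambda>z. z \<in> ball 0 1) (nhds (0::complex))"
    by (rule eventually_nhds_in_open[OF ob zb])
  have hole: "(\<lambda>z. exp (w z)) holomorphic_on ball 0 1" by (intro holomorphic_intros holw)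
  define F where "F = fps_expansion f 0"
  define W where "W = fps_expansion w 0"
  define E where "E = fps_expansion (\<lambda>z. exp (w z)) 0"
  have hF: "f has_fps_expansion F" unfolding F_def by (rule has_fps_expansion_fps_expansion[OF ob zb holf])
  have hW: "w has_fps_expansion W" unfolding W_def by (rule has_fps_expansion_fps_expansion[OF ob zb holw])
  have hE: "(\<lambda>z. exp (w z)) has_fps_expansion E" unfolding E_def
    by (rule has_fps_expansion_fps_expansion[OF ob zb hole])
  have ode: "fps_deriv E = fps_deriv W * E"
  proof (rule fps_unique)
    show "deriv (\<lambda>z. exp (w z)) has_fps_expansion fps_deriv E" by (rule has_fps_expansion_deriv[OF hE])
    show "(\<lambda>z. deriv w z * exp (w z)) has_fps_expansion fps_deriv W * E"
      by (rule has_fps_expansion_mult[OF has_fps_expansion_deriv[OF hW] hE])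
    show "eventually (\<lambda>z. deriv (\<lambda>z. exp (w z)) z = deriv w z * exp (w z)) (nhds 0)"
      using ev
    proof eventually_elim
      case (elim z)
      have "(w has_field_derivative deriv w z) (at z)" by (rule holomorphic_derivI[OF holw ob elim])
      hence "((\<lambda>z. exp (w z)) has_field_derivative exp (w z) * deriv w z) (at z)"
        by (rule DERIV_chain2[OF DERIV_exp])
      thus ?case by (simp add: DERIV_imp_deriv mult.commute)
    qed
  qed
  have feq: "fps_X * fps_deriv F = F * (1 + W * E)"
  proof (rule fps_unique)
    show "(\<lambda>z. z * deriv f z) has_fps_expansion fps_X * fps_deriv F"
      by (rule has_fps_expansion_mult[OF has_fps_expansion_fps_X has_fps_expansion_deriv[OF hF]])
    show "(\<lambda>z. f z * (1 + w z * exp (w z))) has_fps_expansion F * (1 + W * E)"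
      by (rule has_fps_expansion_mult[OF hF has_fps_expansion_add[OF has_fps_expansion_1 has_fps_expansion_mult[OF hW hE]]])
    show "eventually (\<lambda>z. z * deriv f z = f z * (1 + w z * exp (w z))) (nhds 0)"
      using ev by eventually_elim (rule eqz)
  qed
  have W0: "(fps_nth W 0) = 0" using fps_nth_fps_expansion[OF hW, of 0] w0 by simp
  have E0: "(fps_nth E 0) = 1" using fps_nth_fps_expansion[OF hE, of 0] w0 by simp
  have F0: "(fps_nth F 0) = 0" using fps_nth_fps_expansion[OF hF, of 0] f0 by simp
  have F1: "(fps_nth F 1) = 1" using fps_nth_fps_expansion[OF hF, of 1] df0 by simp
  note cf = fps_coeff_extract[OF W0 E0 F0 F1 ode feq]
  have tc: "taylor_coeff f k = (fps_nth F k)" for k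
    unfolding taylor_coeff_def using fps_nth_fps_expansion[OF hF, of k] by simp
  have wc: "(fps_nth W k) = (deriv ^^ k) w 0 / fact k" for k using fps_nth_fps_expansion[OF hW, of k] .
  have sq: "(\<Sum>k\<le>4. (cmod ((deriv ^^ k) w 0 / fact k))^2) \<le> 1"
    by (rule schwarz_sq_sum[OF holw wlt])
  hence sq': "(cmod ((fps_nth W 1)))^2 + (cmod ((fps_nth W 2)))^2 + (cmod ((fps_nth W 3)))^2 + (cmod ((fps_nth W 4)))^2 \<le> 1"
    unfolding wc[symmetric] using W0 by (simp add: eval_nat_numeral)
  define c1 where "c1 = (fps_nth W 1)"
  define c2 where "c2 = (fps_nth W 2)"
  define c3 where "c3 = (fps_nth W 3)"
  define c4 where "c4 = (fps_nth W 4)"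
  have b2: "(fps_nth F 2) = c1" and b3: "(fps_nth F 3) = c1^2 + c2/2" and b4: "(fps_nth F 4) = 5/6*c1^3 + 7/6*c1*c2 + c3/3"
    and b5: "(fps_nth F 5) = 5/8*c1^4 + 37/24*c1^2*c2 + 5/6*c1*c3 + 3/8*c2^2 + c4/4"
    using cf unfolding c1_def c2_def c3_def c4_def by auto
  have H: "(fps_nth F 3) * ((fps_nth F 2) * (fps_nth F 4) - ((fps_nth F 3))^2) - (fps_nth F 4) * ((fps_nth F 4) - (fps_nth F 2) * (fps_nth F 3)) + (fps_nth F 5) * ((fps_nth F 3) - ((fps_nth F 2))^2)
      = (-(c1^6)/36) + (5/144*c1^4*c2) + (1/9*c1^3*c3) + (-(25/144*c1^2*c2^2))
      + (-(1/36*c1*c2*c3)) + (1/16*c2^3) + (-(1/9*c3^2)) + (1/8*c2*c4)"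
    unfolding b2 b3 b4 b5 by (simp add: field_simps power2_eq_square power3_eq_cube eval_nat_numeral)
  have "cmod ((-(c1^6)/36) + (5/144*c1^4*c2) + (1/9*c1^3*c3) + (-(25/144*c1^2*c2^2))
      + (-(1/36*c1*c2*c3)) + (1/16*c2^3) + (-(1/9*c3^2)) + (1/8*c2*c4)) \<le> 0.1506"
    by (rule cbound) (use sq' in \<open>simp add: c1_def c2_def c3_def c4_def\<close>)
  thus ?thesis unfolding Let_def tc H by simp
qed


end
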